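(* Let $(\varphi_n)_{n\ge0}$ be vectors in $\mathbb{R}^d$, $r_0=1$, $r_n=1+\sum_{i=1}^n\|\varphi_i\|^2$, and assume $r_n\to\infty$ and $r_n=O(r_{n-1})$. Then there exist a constant $l\ge 1$ and a strictly increasing sequence of nonnegative integers $(t_k)_{k\ge0}$ such that for all $k\ge1$ $$\frac{k}{l}<\frac{r_{t_k}}{r_{t_{k-1}}}<lk,$$ i.e. $r_{t_k}=\Theta(k\,r_{t_{k-1}})$.
   Context: $r_n=O(r_{n-1})$ means there is a constant $C$ with $r_n\le C r_{n-1}$ for all $n\ge1$. *)

theory Defs
  imports "HOL-Analysis.Analysis"
begin

definition rseq :: "(nat \<Rightarrow> 'a::real_normed_vector) \<Rightarrow> nat \<Rightarrow> real" where
  "rseq \<phi> n = 1 + (\<Sum>i=1..n. (norm (\<phi> i))\<^sup>2)"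

end

theory Submission
  imports Defs
begin

fun tseq :: "(nat \<Rightarrow> real) \<Rightarrow> nat \<Rightarrow> nat" where
  "tseq r 0 = 0"
| "tseq r (Suc k) = (LEAST n. r n > real (Suc k) * r (tseq r k))"

lemma rseq_mono: "n \<le> m \<Longrightarrow> rseq \<phi> n \<le> rseq \<phi> m"
  unfolding rseq_def by (intro add_left_mono sum_mono2) auto

lemma rseq_ge1: "rseq \<phi> n \<ge> 1"
  unfolding rseq_def by (simp add: sum_nonneg)

theorem mainTheorem4:
  fixes \<phi> :: "nat \<Rightarrow> real ^ 'd"
  assumes "filterlim (rseq \<phi>) at_top sequentially"
    and "\<exists>C. \<forall>n\<ge>1. rseq \<phi> n \<le> C * rseq \<phi> (n - 1)"
  shows "\<exists>l::real. l \<ge> 1 \<and> (\<exists>t::nat \<Rightarrow> nat. strict_mono t \<and>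
           (\<forall>k\<ge>1. real k / l < rseq \<phi> (t k) / rseq \<phi> (t (k - 1)) \<and>
                   rseq \<phi> (t k) / rseq \<phi> (t (k - 1)) < l * real k))"
proof -
  define r where "r = rseq \<phi>"
  obtain C where C: "\<And>n. n \<ge> 1 \<Longrightarrow> r n \<le> C * r (n - 1)" using assms(2) r_def by blast
  have mono: "\<And>n m. n \<le> m \<Longrightarrow> r n \<le> r m" unfolding r_def by (rule rseq_mono)
  have pos: "\<And>n. r n \<ge> 1" unfolding r_def by (rule rseq_ge1)
  have C1: "C \<ge> 1"
  proof -
    have "r 1 \<le> C * r 0" using C[of 1] by simp
    moreover have "r 0 \<le> r 1" using mono by simp
    ultimately have "r 0 \<le> C * r 0" by linarith
    thus ?thesis using pos[of 0] by (simp add: mult_le_cancel_right2)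
  qed
  have ex: "\<exists>n. r n > z" for z
  proof -
    have "eventually (\<lambda>n. z < r n) sequentially"
      using assms(1) unfolding r_def filterlim_at_top_dense by blast
    thus ?thesis unfolding eventually_sequentially by auto
  qed
  define t where "t = tseq r"
  have step: "r (t (Suc k)) > real (Suc k) * r (t k) \<and> t (Suc k) > t k \<and>
     r (t (Suc k) - 1) \<le> real (Suc k) * r (t k)" for k
  proof -
    let ?P = "\<lambda>n. r n > real (Suc k) * r (t k)"
    have ts: "t (Suc k) = (LEAST n. ?P n)" unfolding t_def by simp
    obtain n0 where "?P n0" using ex by blast
    hence P1: "?P (t (Suc k))" unfolding ts by (rule LeastI)
    have gt: "t (Suc k) > t k"
    proof (rule ccontr)
      assume "\<not> t k < t (Suc k)"
      hence "r (t (Suc k)) \<le> r (t k)" using mono by simp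
      also have "\<dots> \<le> real (Suc k) * r (t k)" using pos[of "t k"] by simp
      finally show False using P1 by simp
    qed
    have "\<not> ?P (t (Suc k) - 1)"
      using gt unfolding ts by (intro not_less_Least) auto
    thus ?thesis using P1 gt by simp
  qed
  show ?thesis
  proof (intro exI conjI allI impI)
    show "1 \<le> C + 1" using C1 by simp
    show "strict_mono t" using step by (intro strict_monoI_Suc) blast
    fix k :: nat assume k: "k \<ge> 1"
    then obtain j where kj: "k = Suc j" by (cases k) auto
    have s: "r (t k) > real k * r (t j)" "r (t k - 1) \<le> real k * r (t j)" "t k > t j"
      using step[of j] kj by auto
    have rp: "r (t j) > 0" using pos[of "t j"] by simp
    have "r (t k) \<le> C * r (t k - 1)" using C[of "t k"] s(3) by simp
    also have "\<dots> \<le> C * (real k * r (t j))" using s(2) C1 by simp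
    also have "\<dots> < (C + 1) * real k * r (t j)" using rp k by (simp add: algebra_simps)
    finally have up: "r (t k) < (C + 1) * real k * r (t j)" .
    have "real k / (C + 1) \<le> real k" using C1 by (simp add: divide_le_eq mult_le_cancel_left1)
    also have "real k < r (t k) / r (t j)" using s(1) rp by (simp add: less_divide_eq)
    finally show "real k / (C + 1) < rseq \<phi> (t k) / rseq \<phi> (t (k - 1))"
      using kj r_def by simp
    show "rseq \<phi> (t k) / rseq \<phi> (t (k - 1)) < (C + 1) * real k"
      using up rp kj r_def by (simp add: divide_less_eq)
  qed
qed

end
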